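(* The consecutive patterns $\underline{2010}$ and $\underline{2110}$ are reciprocal, and the consecutive patterns $\underline{2110}$ and $\underline{2120}$ are reciprocal. Here two consecutive patterns $p,q$ are reciprocal if for every $n\ge1$ and all $S,T\subseteq[n]$, $$|\{\epsilon\in I_n:\operatorname{Em}(p,\epsilon)=S,\ \operatorname{Em}(q,\epsilon)=T\}|=|\{\epsilon\in I_n:\operatorname{Em}(p,\epsilon)=T,\ \operatorname{Em}(q,\epsilon)=S\}|.$$
   Context: An inversion sequence of length $n$ is an integer sequence $\epsilon=\epsilon_1\cdots\epsilon_n$ with $0\le\epsilon_i<i$ for all $i$; $I_n$ denotes the set of them. The reduction of an integer word is obtained by replacing every occurrence of its $k$-th smallest distinct value by $k-1$. A consecutive pattern $p=\underline{p_1\cdots p_r}$ occurs in a sequence $\epsilon$ at position $i$ if the reduction of $\epsilon_i\epsilon_{i+1}\cdots\epsilon_{i+r-1}$ equals $p_1\cdots p_r$. $\operatorname{Em}(p,\epsilon)$ is the set of all positions at which $p$ occurs in $\epsilon$, and $[n]=\{1,\dots,n\}$. *)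

theory Defs
  imports Main
begin

text \<open>Inversion sequences of length n, as lists e with e!(i-1) < i for i in 1..n
  (i.e. e!j < j+1 for j < n, 0-based list indexing).\<close>
definition inv_seqs :: "nat \<Rightarrow> nat list set" where
  "inv_seqs n = {e. length e = n \<and> (\<forall>j<n. e ! j < Suc j)}"

definition reduction :: "nat list \<Rightarrow> nat list" where
  "reduction w = map (\<lambda>x. card {y \<in> set w. y < x}) w"

definition factor :: "nat list \<Rightarrow> nat \<Rightarrow> nat \<Rightarrow> nat list" where
  "factor e i r = take r (drop (i - 1) e)"

definition Em :: "nat list \<Rightarrow> nat list \<Rightarrow> nat set" where
  "Em p e = {i. 1 \<le> i \<and> i + length p - 1 \<le> length e \<and>
                reduction (factor e i (length p)) = p}"

definition reciprocal :: "nat list \<Rightarrow> nat list \<Rightarrow> bool" where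
  "reciprocal p q \<longleftrightarrow> (\<forall>n\<ge>1. \<forall>S T. S \<subseteq> {1..n} \<longrightarrow> T \<subseteq> {1..n} \<longrightarrow>
     card {e \<in> inv_seqs n. Em p e = S \<and> Em q e = T} =
     card {e \<in> inv_seqs n. Em p e = T \<and> Em q e = S})"

end

theory Submission
  imports Defs
begin

lemma fiber_card: "finite Y \<Longrightarrow> finite P \<Longrightarrow> f ` Y \<subseteq> P \<Longrightarrow> card Y = (\<Sum>p\<in>P. card {x\<in>Y. f x = p})"
  using sum.group[of Y P f "\<lambda>_. 1::nat"] by simp

lemma swap_from_up:
  fixes F G :: "'a \<Rightarrow> nat set"
  assumes finX: "finite X" and finU: "finite U"
    and sub: "\<And>x. x \<in> X \<Longrightarrow> F x \<subseteq> U \<and> G x \<subseteq> U"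
    and up: "\<And>A B. A \<subseteq> U \<Longrightarrow> B \<subseteq> U \<Longrightarrow>
       card {x\<in>X. A \<subseteq> F x \<and> B \<subseteq> G x} = card {x\<in>X. B \<subseteq> F x \<and> A \<subseteq> G x}"
  shows "S \<subseteq> U \<Longrightarrow> T \<subseteq> U \<Longrightarrow>
    card {x\<in>X. F x = S \<and> G x = T} = card {x\<in>X. F x = T \<and> G x = S}"
proof (induction "card (U - S) + card (U - T)" arbitrary: S T rule: less_induct)
  case (less S T)
  define E where "E = (\<lambda>S' T'. card {x\<in>X. F x = S' \<and> G x = T'})"
  define P where "P = {(S',T'). S \<subseteq> S' \<and> S' \<subseteq> U \<and> T \<subseteq> T' \<and> T' \<subseteq> U}"
  have finP: "finite P"
  proof -
    have "P \<subseteq> Pow U \<times> Pow U" unfolding P_def by auto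
    then show ?thesis using finU by (meson finite_Pow_iff finite_SigmaI finite_subset)
  qed
  have STP: "(S,T) \<in> P" unfolding P_def using less.prems by auto
  have N1: "card {x\<in>X. S \<subseteq> F x \<and> T \<subseteq> G x} = (\<Sum>p\<in>P. E (fst p) (snd p))"
  proof -
    have "card {x\<in>X. S \<subseteq> F x \<and> T \<subseteq> G x} =
      (\<Sum>p\<in>P. card {x\<in>{x\<in>X. S \<subseteq> F x \<and> T \<subseteq> G x}. (F x, G x) = p})"
      by (rule fiber_card) (use finX finP sub in \<open>auto simp: P_def\<close>)
    also have "\<dots> = (\<Sum>p\<in>P. E (fst p) (snd p))"
      by (rule sum.cong) (auto simp: E_def P_def intro!: arg_cong[where f=card])
    finally show ?thesis .
  qed
  have N2: "card {x\<in>X. T \<subseteq> F x \<and> S \<subseteq> G x} = (\<Sum>p\<in>P. E (snd p) (fst p))"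
  proof -
    have "card {x\<in>X. T \<subseteq> F x \<and> S \<subseteq> G x} =
      (\<Sum>p\<in>P. card {x\<in>{x\<in>X. T \<subseteq> F x \<and> S \<subseteq> G x}. (G x, F x) = p})"
      by (rule fiber_card) (use finX finP sub in \<open>auto simp: P_def\<close>)
    also have "\<dots> = (\<Sum>p\<in>P. E (snd p) (fst p))"
      by (rule sum.cong) (auto simp: E_def P_def intro!: arg_cong[where f=card])
    finally show ?thesis .
  qed
  have rest: "(\<Sum>p\<in>P-{(S,T)}. E (fst p) (snd p)) = (\<Sum>p\<in>P-{(S,T)}. E (snd p) (fst p))"
  proof (rule sum.cong)
    fix p assume p: "p \<in> P - {(S,T)}"
    obtain S' T' where pe: "p = (S',T')" by fastforce
    have h: "S \<subseteq> S'" "S' \<subseteq> U" "T \<subseteq> T'" "T' \<subseteq> U" "S \<noteq> S' \<or> T \<noteq> T'"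
      using p pe unfolding P_def by auto
    have m1: "card (U - S') \<le> card (U - S)" using h finU by (intro card_mono) auto
    have m2: "card (U - T') \<le> card (U - T)" using h finU by (intro card_mono) auto
    have "card (U - S') < card (U - S) \<or> card (U - T') < card (U - T)"
    proof (cases "S \<noteq> S'")
      case True
      then have "U - S' \<subset> U - S" using h by auto
      then show ?thesis using finU by (meson finite_Diff psubset_card_mono)
    next
      case False
      then have "U - T' \<subset> U - T" using h by auto
      then show ?thesis using finU by (meson finite_Diff psubset_card_mono)
    qed
    then have "card (U - S') + card (U - T') < card (U - S) + card (U - T)" using m1 m2 by linarith
    then show "E (fst p) (snd p) = E (snd p) (fst p)"
      using less.hyps[of S' T'] h pe unfolding E_def by simp
  qed simp
  have "E S T + (\<Sum>p\<in>P-{(S,T)}. E (fst p) (snd p)) = E T S + (\<Sum>p\<in>P-{(S,T)}. E (snd p) (fst p))"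
    using N1 N2 up[OF less.prems] sum.remove[OF finP STP, of "\<lambda>p. E (fst p) (snd p)"]
      sum.remove[OF finP STP, of "\<lambda>p. E (snd p) (fst p)"] by simp
  then show ?case using rest unfolding E_def by simp
qed
definition rk :: "nat set \<Rightarrow> nat \<Rightarrow> nat" where "rk A x = card {y\<in>A. y < x}"
lemma rk_mono: "finite A \<Longrightarrow> x \<le> x' \<Longrightarrow> rk A x \<le> rk A x'"
  unfolding rk_def by (rule card_mono) auto
lemma rk_strict: "finite A \<Longrightarrow> x < x' \<Longrightarrow> x \<in> A \<Longrightarrow> rk A x < rk A x'"
  unfolding rk_def by (rule psubset_card_mono) auto
lemma rk_less: "finite A \<Longrightarrow> rk A x < rk A x' \<Longrightarrow> x < x'"
  using rk_mono by (metis not_le)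
lemma rk_eq: "finite A \<Longrightarrow> x \<in> A \<Longrightarrow> x' \<in> A \<Longrightarrow> rk A x = rk A x' \<Longrightarrow> x = x'"
  using rk_strict by (metis less_irrefl linorder_neqE_nat)
lemma red4: "reduction [a,b,c,d] = [rk {a,b,c,d} a, rk {a,b,c,d} b, rk {a,b,c,d} c, rk {a,b,c,d} d]"
  unfolding reduction_def rk_def by simp

lemma red2010: "reduction [a,b,c,d] = [2,0,1,0] \<longleftrightarrow> b = d \<and> d < c \<and> c < (a::nat)"
proof
  assume h: "reduction [a,b,c,d] = [2,0,1,0]"
  then show "b = d \<and> d < c \<and> c < a" unfolding red4
    using rk_less[of "{a,b,c,d}"] rk_eq[of "{a,b,c,d}"] by (metis finite.emptyI finite.insertI insertCI list.inject zero_less_one one_less_numeral_iff semiring_norm(76))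
next
  assume h: "b = d \<and> d < c \<and> c < (a::nat)"
  then have "{y\<in>{a,b,c,d}. y<a} = {c,d}" "{y\<in>{a,b,c,d}. y<b} = {}" "{y\<in>{a,b,c,d}. y<c} = {d}" "{y\<in>{a,b,c,d}. y<d} = {}" by auto
  then show "reduction [a,b,c,d] = [2,0,1,0]" unfolding red4 rk_def using h by simp
qed
lemma red2110: "reduction [a,b,c,d] = [2,1,1,0] \<longleftrightarrow> d < b \<and> b = c \<and> c < (a::nat)"
proof
  assume h: "reduction [a,b,c,d] = [2,1,1,0]"
  then show "d < b \<and> b = c \<and> c < (a::nat)" unfolding red4
    using rk_less[of "{a,b,c,d}"] rk_eq[of "{a,b,c,d}"] by (metis finite.emptyI finite.insertI insertCI list.inject zero_less_one one_less_numeral_iff semiring_norm(76))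
next
  assume h: "d < b \<and> b = c \<and> c < (a::nat)"
  then have "{y\<in>{a,b,c,d}. y<a} = {b,d}" "{y\<in>{a,b,c,d}. y<b} = {d}" "{y\<in>{a,b,c,d}. y<c} = {d}" "{y\<in>{a,b,c,d}. y<d} = {}" by auto
  then show "reduction [a,b,c,d] = [2,1,1,0]" unfolding red4 rk_def using h by simp
qed
lemma red2120: "reduction [a,b,c,d] = [2,1,2,0] \<longleftrightarrow> d < b \<and> b < a \<and> c = (a::nat)"
proof
  assume h: "reduction [a,b,c,d] = [2,1,2,0]"
  then show "d < b \<and> b < a \<and> c = (a::nat)" unfolding red4
    using rk_less[of "{a,b,c,d}"] rk_eq[of "{a,b,c,d}"] by (metis finite.emptyI finite.insertI insertCI list.inject zero_less_one one_less_numeral_iff semiring_norm(76))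
next
  assume h: "d < b \<and> b < a \<and> c = (a::nat)"
  then have "{y\<in>{a,b,c,d}. y<a} = {b,d}" "{y\<in>{a,b,c,d}. y<b} = {d}" "{y\<in>{a,b,c,d}. y<c} = {b,d}" "{y\<in>{a,b,c,d}. y<d} = {}" by auto
  then show "reduction [a,b,c,d] = [2,1,2,0]" unfolding red4 rk_def using h by simp
qed
definition P1 :: "nat list \<Rightarrow> nat \<Rightarrow> bool" where
  "P1 e i \<longleftrightarrow> 1 \<le> i \<and> i+3 \<le> length e \<and> e!i = e!(i+2) \<and> e!(i+2) < e!(i+1) \<and> e!(i+1) < e!(i-1)"
definition Q1 :: "nat list \<Rightarrow> nat \<Rightarrow> bool" where
  "Q1 e i \<longleftrightarrow> 1 \<le> i \<and> i+3 \<le> length e \<and> e!(i+2) < e!i \<and> e!i = e!(i+1) \<and> e!(i+1) < e!(i-1)"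

function g1 :: "nat set \<Rightarrow> nat set \<Rightarrow> nat list \<Rightarrow> nat \<Rightarrow> nat" where
  "g1 A B e j = (if j \<in> A then e!(j+1) else if j \<in> B \<and> j + 2 < length e then g1 A B e (j+2) else e!j)"
  by auto
termination by (relation "measure (\<lambda>(A,B,e,j). length e - j)") auto
declare g1.simps[simp del]

definition phi1 :: "nat set \<Rightarrow> nat set \<Rightarrow> nat list \<Rightarrow> nat list" where
  "phi1 A B e = map (g1 A B e) [0..<length e]"

lemma phi1_len[simp]: "length (phi1 A B e) = length e" by (simp add: phi1_def)
lemma phi1_nth: "j < length e \<Longrightarrow> phi1 A B e ! j = g1 A B e j" by (simp add: phi1_def)

locale case1 = fixes A B :: "nat set" and e :: "nat list"
  assumes As: "\<And>i. i\<in>A \<Longrightarrow> P1 e i" and Bs: "\<And>i. i\<in>B \<Longrightarrow> Q1 e i"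
begin

lemma site: "i \<in> A \<union> B \<Longrightarrow> 1 \<le> i \<and> i + 3 \<le> length e \<and> e!(i+2) < e!(i+1) \<and> e!(i+1) < e!(i-1)
   \<and> (e!i = e!(i+2) \<or> e!i = e!(i+1))"
  using As Bs unfolding P1_def Q1_def by fastforce

lemma disj: "i \<in> A \<Longrightarrow> i \<notin> B"
  using As Bs unfolding P1_def Q1_def by fastforce

lemma noadj: "i \<in> A \<union> B \<Longrightarrow> Suc i \<notin> A \<union> B"
proof
  assume a: "i \<in> A \<union> B" and b: "Suc i \<in> A \<union> B"
  from site[OF a] site[OF b] show False by auto
qed

lemma noadj': "i \<in> A \<union> B \<Longrightarrow> i - 1 \<notin> A \<union> B"
  using noadj site by (metis Suc_diff_1 less_le_trans zero_less_one)

lemma gA: "i \<in> A \<Longrightarrow> g1 A B e i = e!(i+1)" by (simp add: g1.simps)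
lemma gB: "i \<in> B \<Longrightarrow> g1 A B e i = g1 A B e (i+2)"
  using site[of i] disj by (subst g1.simps) auto
lemma gO: "i \<notin> A \<union> B \<Longrightarrow> g1 A B e i = e!i" by (simp add: g1.simps)

lemma inv: "i \<in> A \<union> B \<Longrightarrow> g1 A B e i \<le> e!(i+1) \<and> g1 A B e (i+2) < e!(i+1)"
proof (induction "length e - i" arbitrary: i rule: less_induct)
  case less
  have s: "i + 3 \<le> length e" "e!(i+2) < e!(i+1)" using site[OF less.prems] by auto
  have g2: "g1 A B e (i+2) < e!(i+1)"
  proof (cases "i+2 \<in> A \<union> B")
    case True
    then have "g1 A B e (i+2) \<le> e!(i+3)" using less.hyps[of "i+2"] s site[OF True] by (auto simp: numeral_eq_Suc)
    moreover have "e!(i+3) < e!(i+1)" using site[OF True] by (simp add: numeral_eq_Suc)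
    ultimately show ?thesis by linarith
  next
    case False then show ?thesis using gO s by simp
  qed
  moreover have "g1 A B e i \<le> e!(i+1)"
    using less.prems gA gB g2 by auto
  ultimately show ?case by simp
qed

lemma valid: "e \<in> inv_seqs n \<Longrightarrow> phi1 A B e \<in> inv_seqs n"
proof -
  assume "e \<in> inv_seqs n"
  then have len: "length e = n" and v: "\<And>j. j<n \<Longrightarrow> e ! j < Suc j" unfolding inv_seqs_def by auto
  have "phi1 A B e ! j < Suc j" if j: "j < n" for j
  proof (cases "j \<in> A \<union> B")
    case True
    have "g1 A B e j \<le> e!(j+1)" using inv[OF True] by simp
    moreover have "e!(j+1) < e!(j-1)" "j - 1 < n" "1 \<le> j" using site[OF True] len j by auto
    moreover have "e!(j-1) < Suc (j-1)" using v \<open>j - 1 < n\<close> by blast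
    ultimately show ?thesis using phi1_nth j len by simp
  next
    case False then show ?thesis using gO phi1_nth j len v by simp
  qed
  then show ?thesis using len unfolding inv_seqs_def by simp
qed

lemma swapA: "i \<in> A \<Longrightarrow> Q1 (phi1 A B e) i"
proof -
  assume a: "i \<in> A"
  then have ab: "i \<in> A \<union> B" by simp
  note s = site[OF ab]
  have n1: "i - 1 \<notin> A \<union> B" using noadj'[OF ab] .
  have n2: "i + 1 \<notin> A \<union> B" using noadj[OF ab] by simp
  have "i - 1 < length e" using s by linarith
  then have "phi1 A B e ! (i-1) = e!(i-1)" using n1 by (simp add: gO phi1_nth)
  moreover have "phi1 A B e ! i = e!(i+1)" using s a by (simp add: gA phi1_nth)
  moreover have "phi1 A B e ! (i+1) = e!(i+1)" using s n2 by (simp add: gO phi1_nth)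
  moreover have "phi1 A B e ! (i+2) < e!(i+1)" using s inv[OF ab] by (simp add: phi1_nth)
  ultimately show ?thesis using s unfolding Q1_def by simp
qed

lemma swapB: "i \<in> B \<Longrightarrow> P1 (phi1 A B e) i"
proof -
  assume a: "i \<in> B"
  then have ab: "i \<in> A \<union> B" by simp
  note s = site[OF ab]
  have n1: "i - 1 \<notin> A \<union> B" using noadj'[OF ab] .
  have n2: "i + 1 \<notin> A \<union> B" using noadj[OF ab] by simp
  have "i - 1 < length e" using s by linarith
  then have "phi1 A B e ! (i-1) = e!(i-1)" using n1 by (simp add: gO phi1_nth)
  moreover have "phi1 A B e ! i = phi1 A B e ! (i+2)" using s a by (simp add: gB phi1_nth)
  moreover have "phi1 A B e ! (i+1) = e!(i+1)" using s n2 by (simp add: gO phi1_nth)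
  moreover have "phi1 A B e ! (i+2) < e!(i+1)" using s inv[OF ab] by (simp add: phi1_nth)
  ultimately show ?thesis using s unfolding P1_def by simp
qed

lemma bk: "j < length e \<Longrightarrow> g1 B A (phi1 A B e) j = e!j"
proof (induction "length e - j" arbitrary: j rule: less_induct)
  case less
  show "g1 B A (phi1 A B e) j = e!j"
  proof (cases "j \<in> A \<union> B")
    case True
    note s = site[OF True]
    have n2: "j + 1 \<notin> A \<union> B" using noadj[OF True] by simp
    show "g1 B A (phi1 A B e) j = e!j"
    proof (cases "j \<in> B")
      case True
      then have "g1 B A (phi1 A B e) j = phi1 A B e ! (j+1)" by (simp add: g1.simps)
      also have "\<dots> = e!(j+1)" using s n2 by (simp add: gO phi1_nth)
      also have "\<dots> = e!j" using Bs[OF True] unfolding Q1_def by simp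
      finally show "g1 B A (phi1 A B e) j = e!j" .
    next
      case False
      then have jA: "j \<in> A" using True by simp
      then have "g1 B A (phi1 A B e) j = g1 B A (phi1 A B e) (j+2)"
        using s False by (subst g1.simps) auto
      also have "\<dots> = e!(j+2)" proof -
        have "length e - (j+2) < length e - j" "j + 2 < length e" using s by linarith+
        then show ?thesis using less.hyps[of "j+2"] by blast
      qed
      also have "\<dots> = e!j" using As[OF jA] unfolding P1_def by simp
      finally show "g1 B A (phi1 A B e) j = e!j" .
    qed
  next
    case False
    then show "g1 B A (phi1 A B e) j = e!j" using gO phi1_nth less.prems by (simp add: g1.simps)
  qed
qed

lemma bk2: "phi1 B A (phi1 A B e) = e"
  by (rule nth_equalityI) (auto simp: phi1_nth bk)

end
definition R2 :: "nat list \<Rightarrow> nat \<Rightarrow> bool" where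
  "R2 e i \<longleftrightarrow> 1 \<le> i \<and> i+3 \<le> length e \<and> e!(i+2) < e!i \<and> e!i < e!(i-1) \<and> e!(i+1) = e!(i-1)"

function g2 :: "nat set \<Rightarrow> nat set \<Rightarrow> nat list \<Rightarrow> nat \<Rightarrow> nat" where
  "g2 A B e j = (if 2 \<le> j \<and> j - 1 \<in> A then g2 A B e (j-2) else if 2 \<le> j \<and> j - 1 \<in> B then e!(j-1) else e!j)"
  by auto
termination by (relation "measure (\<lambda>(A,B,e,j). j)") auto
declare g2.simps[simp del]

definition phi2 :: "nat set \<Rightarrow> nat set \<Rightarrow> nat list \<Rightarrow> nat list" where
  "phi2 A B e = map (g2 A B e) [0..<length e]"

lemma phi2_len[simp]: "length (phi2 A B e) = length e" by (simp add: phi2_def)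
lemma phi2_nth: "j < length e \<Longrightarrow> phi2 A B e ! j = g2 A B e j" by (simp add: phi2_def)

locale case2 = fixes A B :: "nat set" and e :: "nat list"
  assumes As: "\<And>i. i\<in>A \<Longrightarrow> Q1 e i" and Bs: "\<And>i. i\<in>B \<Longrightarrow> R2 e i"
begin

lemma site: "i \<in> A \<union> B \<Longrightarrow> 1 \<le> i \<and> i + 3 \<le> length e \<and> e!(i+2) < e!i \<and> e!i < e!(i-1)
   \<and> (e!(i+1) = e!i \<or> e!(i+1) = e!(i-1))"
  using As Bs unfolding R2_def Q1_def by fastforce

lemma disj: "i \<in> A \<Longrightarrow> i \<notin> B"
  using As Bs unfolding R2_def Q1_def by fastforce

lemma noadj: "i \<in> A \<union> B \<Longrightarrow> Suc i \<notin> A \<union> B"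
proof
  assume a: "i \<in> A \<union> B" and b: "Suc i \<in> A \<union> B"
  from site[OF a] site[OF b] show False by auto
qed

lemma noadj': "i \<in> A \<union> B \<Longrightarrow> i - 1 \<notin> A \<union> B"
  using noadj site by (metis Suc_diff_1 less_le_trans zero_less_one)

lemma gA: "i \<in> A \<Longrightarrow> g2 A B e (i+1) = g2 A B e (i-1)"
  by (subst g2.simps[of A B e "i+1"]) (use site[of i] in auto)
lemma gB: "i \<in> B \<Longrightarrow> g2 A B e (i+1) = e!i"
  by (subst g2.simps[of A B e "i+1"]) (use site[of i] disj in auto)
lemma gO: "(\<And>i. i \<in> A \<union> B \<Longrightarrow> j \<noteq> i + 1) \<Longrightarrow> g2 A B e j = e!j"
proof -
  assume h: "\<And>i. i \<in> A \<union> B \<Longrightarrow> j \<noteq> i + 1"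
  have *: "\<not>(2 \<le> j \<and> j-1 \<in> A)" "\<not> (2 \<le> j \<and> j-1 \<in> B)" using h[of "j-1"] by auto
  show ?thesis by (subst g2.simps) (use * in auto)
qed

lemma inv: "i \<in> A \<union> B \<Longrightarrow> e!i \<le> g2 A B e (i+1) \<and> e!i < g2 A B e (i-1)"
proof (induction i rule: less_induct)
  case (less i)
  note s = site[OF less.prems]
  have g2: "e!i < g2 A B e (i-1)"
  proof (cases "2 \<le> i \<and> i - 2 \<in> A \<union> B")
    case True
    then have "e!(i-2) \<le> g2 A B e (i-2+1)" using less.IH[of "i-2"] s by auto
    moreover have "i - 2 + 1 = i - 1" using True by auto
    moreover have "e!(i-2+2) < e!(i-2)" using site[of "i-2"] True by blast
    moreover have "i-2+2 = i" using True by auto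
    ultimately show ?thesis by (metis less_le_trans)
  next
    case False
    have "g2 A B e (i-1) = e!(i-1)"
    proof (rule gO)
      fix k assume k: "k \<in> A \<union> B"
      show "i - 1 \<noteq> k + 1"
      proof
        assume "i - 1 = k + 1"
        then have "2 \<le> i" "i - 2 = k" by auto
        then show False using False k by auto
      qed
    qed
    then show ?thesis using s by simp
  qed
  moreover have "e!i \<le> g2 A B e (i+1)"
    using less.prems gA gB g2 by auto
  ultimately show ?case by simp
qed

lemma valid: "e \<in> inv_seqs n \<Longrightarrow> phi2 A B e \<in> inv_seqs n"
proof -
  assume "e \<in> inv_seqs n"
  then have len: "length e = n" and v: "\<And>j. j<n \<Longrightarrow> e ! j < Suc j" unfolding inv_seqs_def by auto
  have "j < n \<longrightarrow> g2 A B e j < Suc j" for j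
  proof (induction j rule: less_induct)
    case (less j)
    show ?case
    proof (cases "1 \<le> j \<and> j - 1 \<in> A \<union> B")
      case True
      then obtain i where i: "j = i + 1" "i \<in> A \<union> B" by (metis le_add_diff_inverse2)
      show ?thesis
      proof (cases "i \<in> A")
        case True
        then have "g2 A B e j = g2 A B e (i-1)" using gA i by simp
        moreover have "i - 1 < j" using i by simp
        ultimately show ?thesis using less.IH[of "i-1"] by auto
      next
        case False
        then have "g2 A B e j = e!i" using gB i by simp
        then show ?thesis using v[of i] i by auto
      qed
    next
      case False
      have "g2 A B e j = e!j" by (rule gO) (use False in auto)
      then show ?thesis using v by auto
    qed
  qed
  then show ?thesis using len unfolding inv_seqs_def by (simp add: phi2_nth)
qed

lemma swapA: "i \<in> A \<Longrightarrow> R2 (phi2 A B e) i"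
proof -
  assume a: "i \<in> A"
  then have ab: "i \<in> A \<union> B" by simp
  note s = site[OF ab]
  have n1: "i - 1 \<notin> A \<union> B" using noadj'[OF ab] .
  have n2: "i + 1 \<notin> A \<union> B" using noadj[OF ab] by simp
  have "i - 1 < length e" using s by linarith
  then have "phi2 A B e ! (i-1) = g2 A B e (i-1)" by (simp add: phi2_nth)
  moreover have "phi2 A B e ! i = e!i" using s n1 by (subst phi2_nth) (auto intro!: gO)
  moreover have "phi2 A B e ! (i+1) = g2 A B e (i-1)" using s a gA[OF a] by (simp add: phi2_nth)
  moreover have "phi2 A B e ! (i+2) = e!(i+2)" using s n2 by (subst phi2_nth) (auto intro!: gO)
  moreover have "e!i < g2 A B e (i-1)" using inv[OF ab] by simp
  ultimately show ?thesis using s unfolding R2_def by simp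
qed

lemma swapB: "i \<in> B \<Longrightarrow> Q1 (phi2 A B e) i"
proof -
  assume a: "i \<in> B"
  then have ab: "i \<in> A \<union> B" by simp
  note s = site[OF ab]
  have n1: "i - 1 \<notin> A \<union> B" using noadj'[OF ab] .
  have n2: "i + 1 \<notin> A \<union> B" using noadj[OF ab] by simp
  have "i - 1 < length e" using s by linarith
  then have "phi2 A B e ! (i-1) = g2 A B e (i-1)" by (simp add: phi2_nth)
  moreover have "phi2 A B e ! i = e!i" using s n1 by (subst phi2_nth) (auto intro!: gO)
  moreover have "phi2 A B e ! (i+1) = e!i" using s a gB[OF a] by (simp add: phi2_nth)
  moreover have "phi2 A B e ! (i+2) = e!(i+2)" using s n2 by (subst phi2_nth) (auto intro!: gO)
  moreover have "e!i < g2 A B e (i-1)" using inv[OF ab] by simp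
  ultimately show ?thesis using s unfolding Q1_def by simp
qed

lemma bk: "j < length e \<Longrightarrow> g2 B A (phi2 A B e) j = e!j"
proof (induction j rule: less_induct)
  case (less j)
  show "g2 B A (phi2 A B e) j = e!j"
  proof (cases "1 \<le> j \<and> j - 1 \<in> A \<union> B")
    case True
    then obtain i where i: "j = i + 1" "i \<in> A \<union> B" by (metis le_add_diff_inverse2)
    note s = site[OF i(2)]
    have n1: "i - 1 \<notin> A \<union> B" using noadj'[OF i(2)] .
    show ?thesis
    proof (cases "i \<in> B")
      case True
      then have "g2 B A (phi2 A B e) j = g2 B A (phi2 A B e) (j-2)"
        using i s by (subst g2.simps) auto
      also have "\<dots> = e!(j-2)" using less.IH[of "j-2"] i less.prems s by simp
      also have "\<dots> = e!j" using Bs[OF True] i unfolding R2_def by simp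
      finally show ?thesis .
    next
      case False
      then have iA: "i \<in> A" using i by simp
      then have "g2 B A (phi2 A B e) j = phi2 A B e ! i"
        using i s False by (subst g2.simps) auto
      also have "\<dots> = e!i" using s n1 by (subst phi2_nth) (auto intro!: gO)
      also have "\<dots> = e!j" using As[OF iA] i unfolding Q1_def by simp
      finally show ?thesis .
    qed
  next
    case False
    have "g2 B A (phi2 A B e) j = phi2 A B e ! j"
      using False by (subst g2.simps) (auto simp: numeral_eq_Suc)
    also have "\<dots> = e!j" using False less.prems by (subst phi2_nth) (auto intro!: gO)
    finally show ?thesis .
  qed
qed

lemma bk2: "phi2 B A (phi2 A B e) = e"
  by (rule nth_equalityI) (auto simp: phi2_nth bk)

end
lemma factor4:
  assumes "1 \<le> i" "i+3 \<le> length e"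
  shows "factor e i 4 = [e!(i-1), e!i, e!(i+1), e!(i+2)]"
proof (rule nth_equalityI)
  show "length (factor e i 4) = length [e!(i-1), e!i, e!(i+1), e!(i+2)]"
    using assms by (simp add: factor_def)
  fix k assume "k < length (factor e i 4)"
  then have "k < 4" by (simp add: factor_def)
  then have "k = 0 \<or> k = 1 \<or> k = 2 \<or> k = 3" by auto
  then show "factor e i 4 ! k = [e!(i-1), e!i, e!(i+1), e!(i+2)] ! k"
    using assms by (auto simp: factor_def)
qed

lemma Em4:
  assumes "length p = 4"
  shows "Em p e = {i. 1 \<le> i \<and> i+3 \<le> length e \<and> reduction [e!(i-1), e!i, e!(i+1), e!(i+2)] = p}"
proof (rule set_eqI)
  fix i
  show "i \<in> Em p e \<longleftrightarrow> i \<in> {i. 1 \<le> i \<and> i+3 \<le> length e \<and> reduction [e!(i-1), e!i, e!(i+1), e!(i+2)] = p}"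
    unfolding Em_def using assms factor4[of i e] by auto
qed

lemma Em_P1: "Em [2,0,1,0] e = {i. P1 e i}"
proof -
  have "Em [2,0,1,0] e = {i. 1 \<le> i \<and> i+3 \<le> length e \<and> reduction [e!(i-1), e!i, e!(i+1), e!(i+2)] = [2,0,1,0]}"
    by (rule Em4) simp
  also have "\<dots> = {i. P1 e i}" unfolding red2010 P1_def by auto
  finally show ?thesis .
qed
lemma Em_Q1: "Em [2,1,1,0] e = {i. Q1 e i}"
proof -
  have "Em [2,1,1,0] e = {i. 1 \<le> i \<and> i+3 \<le> length e \<and> reduction [e!(i-1), e!i, e!(i+1), e!(i+2)] = [2,1,1,0]}"
    by (rule Em4) simp
  also have "\<dots> = {i. Q1 e i}" unfolding red2110 Q1_def by auto
  finally show ?thesis .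
qed
lemma Em_R2: "Em [2,1,2,0] e = {i. R2 e i}"
proof -
  have "Em [2,1,2,0] e = {i. 1 \<le> i \<and> i+3 \<le> length e \<and> reduction [e!(i-1), e!i, e!(i+1), e!(i+2)] = [2,1,2,0]}"
    by (rule Em4) simp
  also have "\<dots> = {i. R2 e i}" unfolding red2120 R2_def by auto
  finally show ?thesis .
qed

lemma memP1: "A \<subseteq> Em [2,0,1,0] e \<Longrightarrow> i \<in> A \<Longrightarrow> P1 e i" using Em_P1 by blast
lemma memQ1: "A \<subseteq> Em [2,1,1,0] e \<Longrightarrow> i \<in> A \<Longrightarrow> Q1 e i" using Em_Q1 by blast
lemma memR2: "A \<subseteq> Em [2,1,2,0] e \<Longrightarrow> i \<in> A \<Longrightarrow> R2 e i" using Em_R2 by blast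
lemma subP1: "(\<And>i. i \<in> A \<Longrightarrow> P1 e i) \<Longrightarrow> A \<subseteq> Em [2,0,1,0] e" using Em_P1 by blast
lemma subQ1: "(\<And>i. i \<in> A \<Longrightarrow> Q1 e i) \<Longrightarrow> A \<subseteq> Em [2,1,1,0] e" using Em_Q1 by blast
lemma subR2: "(\<And>i. i \<in> A \<Longrightarrow> R2 e i) \<Longrightarrow> A \<subseteq> Em [2,1,2,0] e" using Em_R2 by blast

lemma finite_inv: "finite (inv_seqs n)"
proof -
  have "inv_seqs n \<subseteq> {xs. set xs \<subseteq> {..<n} \<and> length xs = n}"
  proof
    fix e assume e: "e \<in> inv_seqs n"
    have "set e \<subseteq> {..<n}"
    proof
      fix x assume "x \<in> set e"
      then obtain j where "j < length e" "e!j = x" by (auto simp: in_set_conv_nth)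
      then show "x \<in> {..<n}" using e unfolding inv_seqs_def by auto
    qed
    then show "e \<in> {xs. set xs \<subseteq> {..<n} \<and> length xs = n}" using e unfolding inv_seqs_def by auto
  qed
  then show ?thesis using finite_lists_length_eq[of "{..<n}" n] finite_subset by blast
qed

lemma Em_sub: "e \<in> inv_seqs n \<Longrightarrow> p \<noteq> [] \<Longrightarrow> Em p e \<subseteq> {1..n}"
  unfolding Em_def inv_seqs_def by (cases p) auto

lemma N1_le: "card {e\<in>inv_seqs n. A \<subseteq> Em [2,0,1,0] e \<and> B \<subseteq> Em [2,1,1,0] e}
   \<le> card {e\<in>inv_seqs n. B \<subseteq> Em [2,0,1,0] e \<and> A \<subseteq> Em [2,1,1,0] e}"
proof (rule card_inj_on_le[where f = "phi1 A B"])
  show "finite {e\<in>inv_seqs n. B \<subseteq> Em [2,0,1,0] e \<and> A \<subseteq> Em [2,1,1,0] e}"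
    using finite_inv by simp
  show "inj_on (phi1 A B) {e\<in>inv_seqs n. A \<subseteq> Em [2,0,1,0] e \<and> B \<subseteq> Em [2,1,1,0] e}"
  proof (rule inj_on_inverseI[where g = "phi1 B A"])
    fix e assume "e \<in> {e\<in>inv_seqs n. A \<subseteq> Em [2,0,1,0] e \<and> B \<subseteq> Em [2,1,1,0] e}"
    then interpret case1 A B e by unfold_locales (auto intro: memP1 memQ1)
    show "phi1 B A (phi1 A B e) = e" by (rule bk2)
  qed
  show "phi1 A B ` {e\<in>inv_seqs n. A \<subseteq> Em [2,0,1,0] e \<and> B \<subseteq> Em [2,1,1,0] e}
     \<subseteq> {e\<in>inv_seqs n. B \<subseteq> Em [2,0,1,0] e \<and> A \<subseteq> Em [2,1,1,0] e}"
  proof clarify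
    fix e assume e: "e \<in> inv_seqs n" "A \<subseteq> Em [2,0,1,0] e" "B \<subseteq> Em [2,1,1,0] e"
    then interpret case1 A B e by unfold_locales (auto intro: memP1 memQ1)
    show "phi1 A B e \<in> inv_seqs n \<and> B \<subseteq> Em [2,0,1,0] (phi1 A B e) \<and> A \<subseteq> Em [2,1,1,0] (phi1 A B e)"
      using valid[OF e(1)] swapA swapB subP1 subQ1 by blast
  qed
qed

lemma N2_le: "card {e\<in>inv_seqs n. A \<subseteq> Em [2,1,1,0] e \<and> B \<subseteq> Em [2,1,2,0] e}
   \<le> card {e\<in>inv_seqs n. B \<subseteq> Em [2,1,1,0] e \<and> A \<subseteq> Em [2,1,2,0] e}"
proof (rule card_inj_on_le[where f = "phi2 A B"])
  show "finite {e\<in>inv_seqs n. B \<subseteq> Em [2,1,1,0] e \<and> A \<subseteq> Em [2,1,2,0] e}"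
    using finite_inv by simp
  show "inj_on (phi2 A B) {e\<in>inv_seqs n. A \<subseteq> Em [2,1,1,0] e \<and> B \<subseteq> Em [2,1,2,0] e}"
  proof (rule inj_on_inverseI[where g = "phi2 B A"])
    fix e assume "e \<in> {e\<in>inv_seqs n. A \<subseteq> Em [2,1,1,0] e \<and> B \<subseteq> Em [2,1,2,0] e}"
    then interpret case2 A B e by unfold_locales (auto intro: memR2 memQ1)
    show "phi2 B A (phi2 A B e) = e" by (rule bk2)
  qed
  show "phi2 A B ` {e\<in>inv_seqs n. A \<subseteq> Em [2,1,1,0] e \<and> B \<subseteq> Em [2,1,2,0] e}
     \<subseteq> {e\<in>inv_seqs n. B \<subseteq> Em [2,1,1,0] e \<and> A \<subseteq> Em [2,1,2,0] e}"
  proof clarify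
    fix e assume e: "e \<in> inv_seqs n" "A \<subseteq> Em [2,1,1,0] e" "B \<subseteq> Em [2,1,2,0] e"
    then interpret case2 A B e by unfold_locales (auto intro: memR2 memQ1)
    show "phi2 A B e \<in> inv_seqs n \<and> B \<subseteq> Em [2,1,1,0] (phi2 A B e) \<and> A \<subseteq> Em [2,1,2,0] (phi2 A B e)"
      using valid[OF e(1)] swapA swapB subR2 subQ1 by blast
  qed
qed

lemma recip_from_up:
  assumes "p \<noteq> []" "q \<noteq> []"
    and up: "\<And>n A B. card {e\<in>inv_seqs n. A \<subseteq> Em p e \<and> B \<subseteq> Em q e}
                   \<le> card {e\<in>inv_seqs n. B \<subseteq> Em p e \<and> A \<subseteq> Em q e}"
  shows "reciprocal p q"
  unfolding reciprocal_def
proof (intro allI impI)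
  fix n :: nat and S T assume "n \<ge> 1" "S \<subseteq> {1..n}" "T \<subseteq> {1..n}"
  show "card {e \<in> inv_seqs n. Em p e = S \<and> Em q e = T} = card {e \<in> inv_seqs n. Em p e = T \<and> Em q e = S}"
  proof (rule swap_from_up[where U = "{1..n}"])
    show "finite (inv_seqs n)" by (rule finite_inv)
    show "finite {1..n}" by simp
    show "\<And>x. x \<in> inv_seqs n \<Longrightarrow> Em p x \<subseteq> {1..n} \<and> Em q x \<subseteq> {1..n}"
      using Em_sub assms(1,2) by blast
    show "\<And>A B. A \<subseteq> {1..n} \<Longrightarrow> B \<subseteq> {1..n} \<Longrightarrow>
       card {x\<in>inv_seqs n. A \<subseteq> Em p x \<and> B \<subseteq> Em q x} = card {x\<in>inv_seqs n. B \<subseteq> Em p x \<and> A \<subseteq> Em q x}"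
      using up by (meson le_antisym)
  qed fact+
qed

theorem mainTheorem2:
  shows "reciprocal [2,0,1,0] [2,1,1,0] \<and> reciprocal [2,1,1,0] [2,1,2,0]"
  using recip_from_up[OF _ _ N1_le] recip_from_up[OF _ _ N2_le] by simp

end
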